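(* For a parking graph $P$ on $[n]$, let $\mathbf{d}(P)=(d_1,\dots,d_n)$ where $d_i$ is the number of directed edges (up or down edges) of $P$ pointing into vertex $i$ (downish edges are not counted), and set $\phi(P):=\mathbf{d}(P)+(1,1,\dots,1)$. Then $\phi$ is a bijection from the set of parking graphs on $[n]$ to the set of parking functions of length $n$.
   Context: A parking function of length $n$ is a sequence $(x_1,\dots,x_n)$ of positive integers which, when rearranged in weakly increasing order $x_{(1)}\le\dots\le x_{(n)}$, satisfies $x_{(k)}\le k$ for all $k$; equivalently, it is componentwise at most some permutation of $(1,2,\dots,n)$. A mixed graph may contain both undirected and directed edges. A parking graph $P$ on $[n]$ is a mixed graph with vertex set $[n]$ in which every pair $\{j,k\}$ with $1\le j<k\le n$ is joined by exactly one edge, which is of exactly one of three types: a down edge $j\leftarrow k$ (directed from $k$ to $j$), an up edge $j\rightarrow k$ (directed from $j$ to $k$), or a downish edge $jk$ (undirected). Let $\vec P$ be the directed graph obtained from $P$ by keeping all directed edges and replacing every downish edge $jk$ ($j<k$) by the directed edge $j\leftarrow k$. $P$ must satisfy the source-sink condition: (i) $\vec P$ is acyclic, and (ii) for every triangle of $P$ among whose three edges there is at least one down edge and at least one downish edge, the source (vertex of in-degree $0$ within the triangle in $\vec P$) and the sink (vertex of out-degree $0$ within the triangle in $\vec P$) are not joined by a downish edge in $P$. *)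

theory Defs
  imports Main "HOL-Combinatorics.Permutations"
begin

datatype edge_type = Down | Up | Downish

text \<open>A parking graph on [n] = {1..n} is encoded by a function E such that for
  1 \<le> j < k \<le> n, E j k is the type of the edge between j and k:
  Down means j \<leftarrow> k, Up means j \<rightarrow> k, Downish is the undirected edge jk.
  Values of E outside such pairs are fixed to Down (extensionality), so that
  distinct functions correspond to distinct parking graphs.\<close>

definition edge_pairs :: "nat \<Rightarrow> (nat \<times> nat) set" where
  "edge_pairs n = {(j, k). 1 \<le> j \<and> j < k \<and> k \<le> n}"

definition etype :: "(nat \<Rightarrow> nat \<Rightarrow> edge_type) \<Rightarrow> nat \<Rightarrow> nat \<Rightarrow> edge_type" where
  "etype E a b = (if a < b then E a b else E b a)"

definition arcs :: "nat \<Rightarrow> (nat \<Rightarrow> nat \<Rightarrow> edge_type) \<Rightarrow> (nat \<times> nat) set" where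
  "arcs n E = {(k, j) | j k. (j, k) \<in> edge_pairs n \<and> E j k \<noteq> Up}
            \<union> {(j, k) | j k. (j, k) \<in> edge_pairs n \<and> E j k = Up}"

definition triangle_cond :: "nat \<Rightarrow> (nat \<Rightarrow> nat \<Rightarrow> edge_type) \<Rightarrow> bool" where
  "triangle_cond n E \<longleftrightarrow>
    (\<forall>a\<in>{1..n}. \<forall>b\<in>{1..n}. \<forall>c\<in>{1..n}. a \<noteq> b \<and> b \<noteq> c \<and> a \<noteq> c \<longrightarrow>
       (let T = {a, b, c};
            ts = {etype E a b, etype E b c, etype E a c} in
        Down \<in> ts \<and> Downish \<in> ts \<longrightarrow>
        (\<forall>s\<in>T. \<forall>t\<in>T.
           (\<forall>u\<in>T. (u, s) \<notin> arcs n E) \<and> (\<forall>u\<in>T. (t, u) \<notin> arcs n E) \<and> s \<noteq> t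
           \<longrightarrow> etype E s t \<noteq> Downish)))"

definition parking_graphs :: "nat \<Rightarrow> (nat \<Rightarrow> nat \<Rightarrow> edge_type) set" where
  "parking_graphs n = {E. (\<forall>j k. (j, k) \<notin> edge_pairs n \<longrightarrow> E j k = Down)
                          \<and> acyclic (arcs n E) \<and> triangle_cond n E}"

definition parking_functions :: "nat \<Rightarrow> (nat \<Rightarrow> nat) set" where
  "parking_functions n = {x. (\<forall>i. i \<notin> {1..n} \<longrightarrow> x i = 0) \<and> (\<forall>i\<in>{1..n}. 1 \<le> x i) \<and>
      (\<exists>\<sigma>. \<sigma> permutes {1..n} \<and> (\<forall>i\<in>{1..n}. x i \<le> \<sigma> i))}"

definition directed_indeg :: "nat \<Rightarrow> (nat \<Rightarrow> nat \<Rightarrow> edge_type) \<Rightarrow> nat \<Rightarrow> nat" where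
  "directed_indeg n E i = card {u \<in> {1..n}. u \<noteq> i \<and> (u, i) \<in> arcs n E \<and> etype E u i \<noteq> Downish}"

definition phi :: "nat \<Rightarrow> (nat \<Rightarrow> nat \<Rightarrow> edge_type) \<Rightarrow> (nat \<Rightarrow> nat)" where
  "phi n E = (\<lambda>i. if i \<in> {1..n} then directed_indeg n E i + 1 else 0)"

end

theory Submission
  imports Defs
begin

lemma etype_sym: "a \<noteq> b \<Longrightarrow> etype E a b = etype E b a"
  by (auto simp: etype_def)

lemma arcs_iff:
  "(x, y) \<in> arcs n E \<longleftrightarrow> x \<in> {1..n} \<and> y \<in> {1..n} \<and> x \<noteq> y \<and>
     ((x < y \<and> etype E x y = Up) \<or> (y < x \<and> etype E x y \<noteq> Up))"
  unfolding arcs_def edge_pairs_def etype_def by auto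

definition pg :: "nat \<Rightarrow> (nat \<Rightarrow> nat \<Rightarrow> edge_type) \<Rightarrow> bool" where
  "pg n E \<longleftrightarrow> E \<in> parking_graphs n"

lemma arcs_total:
  assumes "x \<in> {1..n}" "y \<in> {1..n}" "x \<noteq> y"
  shows "(x, y) \<in> arcs n E \<or> (y, x) \<in> arcs n E"
  using assms unfolding arcs_iff by (cases "x < y") (auto simp: etype_sym)

lemma arcs_asym: "(x, y) \<in> arcs n E \<Longrightarrow> (y, x) \<notin> arcs n E"
  unfolding arcs_iff by (auto simp: etype_sym)

lemma arcs_trans:
  assumes "acyclic (arcs n E)" "(x, y) \<in> arcs n E" "(y, z) \<in> arcs n E"
  shows "(x, z) \<in> arcs n E"
proof -
  have xz: "x \<in> {1..n}" "z \<in> {1..n}" using assms(2,3) unfolding arcs_iff by auto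
  have "x \<noteq> z" using arcs_asym assms(2,3) by blast
  moreover have "(z, x) \<notin> arcs n E"
  proof
    assume "(z, x) \<in> arcs n E"
    then have "(x, x) \<in> (arcs n E)\<^sup>+" using assms(2,3)
      by (meson trancl.r_into_trancl trancl_into_trancl)
    then show False using assms(1) unfolding acyclic_def by blast
  qed
  ultimately show ?thesis using arcs_total[OF xz] by blast
qed

lemma tri_use:
  assumes "triangle_cond n E" "(x, y) \<in> arcs n E" "(y, z) \<in> arcs n E" "(x, z) \<in> arcs n E"
    and "etype E x z = Downish"
  shows "etype E x y \<noteq> Down \<and> etype E y z \<noteq> Down"
proof (rule ccontr)
  assume c: "\<not> (etype E x y \<noteq> Down \<and> etype E y z \<noteq> Down)"
  have r: "x \<in> {1..n}" "y \<in> {1..n}" "z \<in> {1..n}" "x \<noteq> y" "y \<noteq> z" "x \<noteq> z"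
    using assms(2,3,4) unfolding arcs_iff by auto
  have src: "\<forall>u\<in>{x,y,z}. (u, x) \<notin> arcs n E"
    using assms(2,4) arcs_asym[of x y n E] arcs_asym[of x z n E] r by (auto simp: arcs_iff)
  have snk: "\<forall>u\<in>{x,y,z}. (z, u) \<notin> arcs n E"
    using assms(3,4) arcs_asym[of y z n E] arcs_asym[of x z n E] r by (auto simp: arcs_iff)
  have dd: "Down \<in> {etype E x y, etype E y z, etype E x z} \<and> Downish \<in> {etype E x y, etype E y z, etype E x z}"
    using c assms(5) by auto
  from assms(1) r have
    "(let T = {x, y, z}; ts = {etype E x y, etype E y z, etype E x z} in
        Down \<in> ts \<and> Downish \<in> ts \<longrightarrow>
        (\<forall>s\<in>T. \<forall>t\<in>T.
           (\<forall>u\<in>T. (u, s) \<notin> arcs n E) \<and> (\<forall>u\<in>T. (t, u) \<notin> arcs n E) \<and> s \<noteq> t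
           \<longrightarrow> etype E s t \<noteq> Downish))"
    unfolding triangle_cond_def by blast
  then have "etype E x z \<noteq> Downish" using dd src snk r unfolding Let_def by blast
  then show False using assms(5) by simp
qed

lemma nd_iff:
  assumes "(x, z) \<in> arcs n E"
  shows "etype E x z \<noteq> Downish \<longleftrightarrow> x < z \<or> etype E x z = Down"
  using assms unfolding arcs_iff by (cases "etype E x z") auto

lemma pgD: "pg n E \<Longrightarrow> acyclic (arcs n E) \<and> triangle_cond n E \<and> (\<forall>j k. (j, k) \<notin> edge_pairs n \<longrightarrow> E j k = Down)"
  unfolding pg_def parking_graphs_def by auto

lemma cmp_lemma:
  assumes E: "pg n E" and E': "pg n E'"
    and P: "\<forall>x\<in>P. (x, z) \<in> arcs n E \<and> (x, z) \<in> arcs n E'"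
    and ord: "\<forall>x\<in>P. \<forall>y\<in>P. (x, y) \<in> arcs n E \<longleftrightarrow> (x, y) \<in> arcs n E'"
  shows "{x\<in>P. x < z \<or> etype E x z = Down} \<subseteq> {x\<in>P. x < z \<or> etype E' x z = Down}
       \<or> {x\<in>P. x < z \<or> etype E' x z = Down} \<subseteq> {x\<in>P. x < z \<or> etype E x z = Down}"
proof (rule ccontr)
  assume "\<not> ?thesis"
  then obtain x y where x: "x \<in> P" "\<not> x < z" "etype E x z = Down" "etype E' x z \<noteq> Down"
    and y: "y \<in> P" "\<not> y < z" "etype E' y z = Down" "etype E y z \<noteq> Down"
    by blast
  have ac: "acyclic (arcs n E)" "triangle_cond n E" "acyclic (arcs n E')" "triangle_cond n E'"
    using pgD[OF E] pgD[OF E'] by auto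
  have xz: "(x, z) \<in> arcs n E" "(x, z) \<in> arcs n E'" "(y, z) \<in> arcs n E" "(y, z) \<in> arcs n E'"
    using P x y by auto
  have "x \<noteq> y" using x y by auto
  moreover have "x \<in> {1..n}" "y \<in> {1..n}" using xz unfolding arcs_iff by auto
  ultimately have "(x, y) \<in> arcs n E \<or> (y, x) \<in> arcs n E" using arcs_total by blast
  then show False
  proof
    assume "(x, y) \<in> arcs n E"
    then have xy: "(x, y) \<in> arcs n E'" using ord x y by blast
    have "etype E' x z \<noteq> Up" using xz(2) x(2) unfolding arcs_iff by auto
    then have "etype E' x z = Downish" using x(4) by (cases "etype E' x z") auto
    then have "etype E' y z \<noteq> Down" using tri_use[OF ac(4) xy xz(4) xz(2)] by blast
    then show False using y by simp
  next
    assume yx: "(y, x) \<in> arcs n E"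
    have "etype E y z \<noteq> Up" using xz(3) y(2) unfolding arcs_iff by auto
    then have "etype E y z = Downish" using y(4) by (cases "etype E y z") auto
    then have "etype E x z \<noteq> Down" using tri_use[OF ac(2) yx xz(1) xz(3)] by blast
    then show False using x by simp
  qed
qed

definition Cnt :: "nat \<Rightarrow> (nat \<Rightarrow> nat \<Rightarrow> edge_type) \<Rightarrow> nat \<Rightarrow> nat set" where
  "Cnt n E z = {u \<in> {1..n}. u \<noteq> z \<and> (u, z) \<in> arcs n E \<and> etype E u z \<noteq> Downish}"

lemma finite_Cnt: "finite (Cnt n E z)" unfolding Cnt_def by auto

lemma phi_Cnt: "z \<in> {1..n} \<Longrightarrow> phi n E z = card (Cnt n E z) + 1"
  unfolding phi_def directed_indeg_def Cnt_def by simp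

lemma Cnt_pred:
  assumes "{x. (x, z) \<in> arcs n E} = A"
  shows "Cnt n E z = {x\<in>A. x < z \<or> etype E x z = Down}"
proof -
  have "\<And>x. x \<in> A \<Longrightarrow> (x, z) \<in> arcs n E" using assms by auto
  show ?thesis
  proof (rule set_eqI, rule iffI)
    fix x assume "x \<in> Cnt n E z"
    then show "x \<in> {x\<in>A. x < z \<or> etype E x z = Down}"
      using assms nd_iff[of x z n E] unfolding Cnt_def by auto
  next
    fix x assume x: "x \<in> {x\<in>A. x < z \<or> etype E x z = Down}"
    then have a: "(x, z) \<in> arcs n E" using assms by auto
    then have "x \<in> {1..n}" "x \<noteq> z" unfolding arcs_iff by auto
    then show "x \<in> Cnt n E z" using a x nd_iff[OF a] unfolding Cnt_def by auto
  qed
qed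

lemma inj_core:
  assumes E: "pg n E" and E': "pg n E'"
    and ph: "\<forall>z\<in>{1..n}. card (Cnt n E z) = card (Cnt n E' z)"
    and A: "A \<subseteq> {1..n}" and u: "u \<notin> A" and u': "u' \<notin> A"
    and pu: "{x. (x, u) \<in> arcs n E} = A" and pu': "{x. (x, u') \<in> arcs n E'} = A"
    and uu': "(u, u') \<in> arcs n E" and u'u: "(u', u) \<in> arcs n E'"
    and ord: "\<forall>x\<in>A. \<forall>y\<in>A. (x, y) \<in> arcs n E \<longleftrightarrow> (x, y) \<in> arcs n E'"
    and lt: "u < u'"
  shows False
proof -
  have ac: "acyclic (arcs n E)" "triangle_cond n E" "acyclic (arcs n E')" "triangle_cond n E'"
    using pgD[OF E] pgD[OF E'] by auto
  have un: "u \<in> {1..n}" "u' \<in> {1..n}" using uu' unfolding arcs_iff by auto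
  have fA: "finite A" using A finite_subset by blast
  define S where "S = {x\<in>A. x < u' \<or> etype E x u' = Down}"
  define S' where "S' = {x\<in>A. x < u' \<or> etype E' x u' = Down}"
  have CS': "Cnt n E' u' = S'" unfolding S'_def by (rule Cnt_pred[OF pu'])
  have xu'E: "(x, u') \<in> arcs n E" if "x \<in> A" for x
    using arcs_trans[OF ac(1) _ uu'] pu that by blast
  have "insert u S \<subseteq> Cnt n E u'"
  proof
    fix x assume "x \<in> insert u S"
    then show "x \<in> Cnt n E u'"
    proof
      assume "x = u"
      then show ?thesis using uu' lt nd_iff[OF uu'] un unfolding Cnt_def by auto
    next
      assume "x \<in> S"
      then have "x \<in> A" "x < u' \<or> etype E x u' = Down" unfolding S_def by auto
      moreover have "(x, u') \<in> arcs n E" using xu'E \<open>x \<in> A\<close> by blast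
      ultimately show ?thesis using nd_iff[of x u' n E] A unfolding Cnt_def
        by (auto simp: arcs_iff)
    qed
  qed
  then have "card (insert u S) \<le> card (Cnt n E u')" by (rule card_mono[OF finite_Cnt])
  moreover have "card (insert u S) = card S + 1" using u fA unfolding S_def by simp
  moreover have "card (Cnt n E' u') = card (Cnt n E u')" using ph un(2) by metis
  ultimately have "card S + 1 \<le> card S'" using CS' by simp
  then have "\<not> S' \<subseteq> S" using card_mono[of S S'] fA unfolding S_def by auto
  then obtain x0 where x0: "x0 \<in> A" "x0 < u' \<or> etype E' x0 u' = Down" "\<not> x0 < u'"
      "etype E x0 u' \<noteq> Down"
    unfolding S_def S'_def by blast
  have "x0 \<noteq> u'" using x0 u' by auto
  then have gt: "u' < x0" using x0 by simp
  have D': "etype E' x0 u' = Down" using x0 by simp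
  have "etype E x0 u' \<noteq> Up" using xu'E[OF x0(1)] gt unfolding arcs_iff by auto
  then have W: "etype E x0 u' = Downish" using x0(4) by (cases "etype E x0 u'") auto
  have x0u: "(x0, u) \<in> arcs n E" using pu x0 by blast
  have "etype E x0 u \<noteq> Down" using tri_use[OF ac(2) x0u uu' xu'E[OF x0(1)] W] by blast
  moreover have "etype E x0 u \<noteq> Up" using x0u gt lt unfolding arcs_iff by auto
  ultimately have W2: "etype E x0 u = Downish" by (cases "etype E x0 u") auto
  define T where "T = {x\<in>A. x < u \<or> etype E x u = Down}"
  define T' where "T' = {x\<in>A. x < u \<or> etype E' x u = Down}"
  have CT: "Cnt n E u = T" unfolding T_def by (rule Cnt_pred[OF pu])
  have xuE': "(x, u) \<in> arcs n E'" if "x \<in> A" for x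
    using arcs_trans[OF ac(3) _ u'u] pu' that by blast
  have "T' \<subseteq> Cnt n E' u"
  proof
    fix x assume "x \<in> T'"
    then have "x \<in> A" "x < u \<or> etype E' x u = Down" unfolding T'_def by auto
    moreover have "(x, u) \<in> arcs n E'" using xuE' \<open>x \<in> A\<close> by blast
    ultimately show "x \<in> Cnt n E' u" using nd_iff[of x u n E'] A unfolding Cnt_def
      by (auto simp: arcs_iff)
  qed
  then have "card T' \<le> card (Cnt n E' u)" by (rule card_mono[OF finite_Cnt])
  moreover have "card (Cnt n E' u) = card (Cnt n E u)" using ph un(1) by metis
  ultimately have cTT: "card T' \<le> card T" using CT by simp
  have "T \<subseteq> T' \<or> T' \<subseteq> T" unfolding T_def T'_def
    by (rule cmp_lemma[OF E E']) (use pu xuE' ord in blast)+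
  then have "T' \<subseteq> T"
  proof
    assume "T \<subseteq> T'"
    moreover have "finite T'" using fA unfolding T'_def by simp
    ultimately have "T = T'" using cTT card_subset_eq by (metis antisym card_mono)
    then show ?thesis by simp
  qed
  moreover have "x0 \<notin> T" using W2 gt lt unfolding T_def by auto
  ultimately have "x0 \<notin> T'" by blast
  then have "etype E' x0 u \<noteq> Down" using x0(1) unfolding T'_def by auto
  moreover have "etype E' x0 u \<noteq> Up" using xuE'[OF x0(1)] gt lt unfolding arcs_iff by auto
  ultimately have "etype E' x0 u = Downish" by (cases "etype E' x0 u") auto
  then have "etype E' x0 u' \<noteq> Down"
    using tri_use[OF ac(4) _ u'u xuE'[OF x0(1)]] pu' x0(1) by blast
  then show False using D' by simp
qed

lemma same_arcs_eq:
  assumes E: "pg n E" and E': "pg n E'" and R: "arcs n E = arcs n E'"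
    and ph: "\<forall>z\<in>{1..n}. card (Cnt n E z) = card (Cnt n E' z)"
  shows "E = E'"
proof (rule ext, rule ext)
  fix j k
  show "E j k = E' j k"
  proof (cases "(j, k) \<in> edge_pairs n")
    case False
    then show ?thesis using pgD[OF E] pgD[OF E'] by auto
  next
    case True
    then have jk: "j < k" "j \<in> {1..n}" "k \<in> {1..n}" unfolding edge_pairs_def by auto
    have et: "etype E j k = E j k" "etype E' j k = E' j k" "etype E k j = E j k" "etype E' k j = E' j k"
      using jk unfolding etype_def by auto
    show ?thesis
    proof (cases "(j, k) \<in> arcs n E")
      case True
      then have "(j, k) \<in> arcs n E'" using R by simp
      then have "etype E' j k = Up" using jk unfolding arcs_iff by auto
      moreover have "etype E j k = Up" using True jk unfolding arcs_iff by auto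
      ultimately show ?thesis using et by simp
    next
      case False
      then have kj: "(k, j) \<in> arcs n E" "(k, j) \<in> arcs n E'"
        using arcs_total[OF jk(2,3)] jk R by auto
      define P where "P = {x. (x, j) \<in> arcs n E}"
      have P': "{x. (x, j) \<in> arcs n E'} = P" using R P_def by simp
      have C1: "Cnt n E j = {x\<in>P. x < j \<or> etype E x j = Down}" by (rule Cnt_pred) (simp add: P_def)
      have C2: "Cnt n E' j = {x\<in>P. x < j \<or> etype E' x j = Down}" by (rule Cnt_pred[OF P'])
      have fP: "finite P" unfolding P_def by (rule finite_subset[of _ "{1..n}"]) (auto simp: arcs_iff)
      have cmp: "{x\<in>P. x < j \<or> etype E x j = Down} \<subseteq> {x\<in>P. x < j \<or> etype E' x j = Down}
       \<or> {x\<in>P. x < j \<or> etype E' x j = Down} \<subseteq> {x\<in>P. x < j \<or> etype E x j = Down}"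
        by (rule cmp_lemma[OF E E']) (auto simp: P_def R)
      have cc: "card {x\<in>P. x < j \<or> etype E x j = Down} = card {x\<in>P. x < j \<or> etype E' x j = Down}"
        using bspec[OF ph jk(2)] C1 C2 by simp
      have eqs: "{x\<in>P. x < j \<or> etype E x j = Down} = {x\<in>P. x < j \<or> etype E' x j = Down}"
      proof -
        have f1: "finite {x\<in>P. x < j \<or> etype E x j = Down}" "finite {x\<in>P. x < j \<or> etype E' x j = Down}"
          using fP by auto
        show ?thesis using cmp
        proof
          assume "{x\<in>P. x < j \<or> etype E x j = Down} \<subseteq> {x\<in>P. x < j \<or> etype E' x j = Down}"
          then show ?thesis using card_subset_eq[OF f1(2) _ cc] by blast
        next
          assume "{x\<in>P. x < j \<or> etype E' x j = Down} \<subseteq> {x\<in>P. x < j \<or> etype E x j = Down}"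
          then show ?thesis using card_subset_eq[OF f1(1) _ cc[symmetric]] by blast
        qed
      qed
      have kP: "k \<in> P" using kj P_def by simp
      have "etype E k j = Down \<longleftrightarrow> etype E' k j = Down"
      proof -
        have "k \<in> {x\<in>P. x < j \<or> etype E x j = Down} \<longleftrightarrow> k \<in> {x\<in>P. x < j \<or> etype E' x j = Down}"
          by (simp only: eqs)
        then show ?thesis using kP jk by simp
      qed
      moreover have "etype E k j \<noteq> Up" "etype E' k j \<noteq> Up" using kj jk unfolding arcs_iff by auto
      ultimately show ?thesis using et by (cases "E j k"; cases "E' j k") auto
    qed
  qed
qed

definition pr :: "nat \<Rightarrow> (nat \<Rightarrow> nat \<Rightarrow> edge_type) \<Rightarrow> nat \<Rightarrow> nat set" where
  "pr n E v = {x. (x, v) \<in> arcs n E}"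

lemma pr_sub: "pr n E v \<subseteq> {1..n} - {v}" unfolding pr_def arcs_iff by auto

lemma pr_finite: "finite (pr n E v)" by (rule finite_subset[OF pr_sub]) simp

lemma pr_less:
  assumes "pg n E" "(x, y) \<in> arcs n E"
  shows "pr n E x \<subset> pr n E y"
proof -
  have "pr n E x \<subseteq> pr n E y" using arcs_trans[OF conjunct1[OF pgD[OF assms(1)]] _ assms(2)]
    unfolding pr_def by blast
  moreover have "x \<in> pr n E y" "x \<notin> pr n E x" using assms(2) unfolding pr_def arcs_iff by auto
  ultimately show ?thesis by blast
qed

lemma pr_card_less:
  assumes "pg n E" "(x, y) \<in> arcs n E"
  shows "card (pr n E x) < card (pr n E y)"
  using pr_less[OF assms] pr_finite by (rule psubset_card_mono[rotated])

lemma phi_inj: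
  assumes E: "pg n E" and E': "pg n E'" and eq: "phi n E = phi n E'"
  shows "E = E'"
proof -
  have ph: "\<forall>z\<in>{1..n}. card (Cnt n E z) = card (Cnt n E' z)"
    using eq phi_Cnt by (metis add_right_cancel)
  show ?thesis
  proof (cases "arcs n E = arcs n E'")
    case True
    then show ?thesis using same_arcs_eq[OF E E' _ ph] by simp
  next
    case False
    have "\<exists>v\<in>{1..n}. pr n E v \<noteq> pr n E' v"
    proof (rule ccontr)
      assume "\<not> ?thesis"
      then have "\<forall>v\<in>{1..n}. pr n E v = pr n E' v" by blast
      then have h: "(x, v) \<in> arcs n E \<longleftrightarrow> (x, v) \<in> arcs n E'" for x v
      proof (cases "v \<in> {1..n}")
        case True
        then have "pr n E v = pr n E' v" using \<open>\<forall>v\<in>{1..n}. pr n E v = pr n E' v\<close> by blast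
        then show ?thesis unfolding pr_def by blast
      next
        case False
        then show ?thesis unfolding arcs_iff by blast
      qed
      have "arcs n E = arcs n E'" by (auto simp: h)
      then show False using False by simp
    qed
    then obtain v where "v \<in> {1..n} \<and> pr n E v \<noteq> pr n E' v" by blast
    then obtain u where u: "u \<in> {1..n}" "pr n E u \<noteq> pr n E' u"
      and umin: "\<And>w. w \<in> {1..n} \<and> pr n E w \<noteq> pr n E' w \<Longrightarrow> card (pr n E u) \<le> card (pr n E w)"
      using ex_has_least_nat[of "\<lambda>w. w \<in> {1..n} \<and> pr n E w \<noteq> pr n E' w" v "\<lambda>w. card (pr n E w)"]
      by blast
    define A where "A = pr n E u"
    have good: "pr n E x = pr n E' x" if "x \<in> A" for x
    proof (rule ccontr)
      assume "pr n E x \<noteq> pr n E' x"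
      moreover have "x \<in> {1..n}" using that pr_sub unfolding A_def by blast
      ultimately have "card (pr n E u) \<le> card (pr n E x)" using umin by blast
      moreover have "card (pr n E x) < card (pr n E u)"
        using pr_card_less[OF E] that unfolding A_def pr_def by blast
      ultimately show False by simp
    qed
    have ord: "\<forall>x\<in>A. \<forall>y\<in>A. (x, y) \<in> arcs n E \<longleftrightarrow> (x, y) \<in> arcs n E'"
      using good unfolding pr_def by blast
    have pref: "(x, y) \<in> arcs n E'" if "x \<in> A" "y \<in> {1..n}" "y \<notin> A" for x y
    proof -
      have "(y, x) \<notin> arcs n E'"
      proof
        assume "(y, x) \<in> arcs n E'"
        then have "(y, x) \<in> arcs n E" using good[OF that(1)] unfolding pr_def by blast
        then have "(y, u) \<in> arcs n E" using arcs_trans[OF conjunct1[OF pgD[OF E]]] that(1)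
          unfolding A_def pr_def by blast
        then show False using that(3) unfolding A_def pr_def by blast
      qed
      moreover have "x \<in> {1..n}" "x \<noteq> y" using that pr_sub[of n E u] unfolding A_def by auto
      ultimately show ?thesis using arcs_total that by blast
    qed
    have A_sub: "A \<subseteq> {1..n}" using pr_sub unfolding A_def by blast
    have uA: "u \<notin> A" using pr_sub unfolding A_def by blast
    obtain u' where u': "u' \<in> {1..n} \<and> u' \<notin> A"
      and u'min: "\<And>w. w \<in> {1..n} \<and> w \<notin> A \<Longrightarrow> card (pr n E' u') \<le> card (pr n E' w)"
      using ex_has_least_nat[of "\<lambda>w. w \<in> {1..n} \<and> w \<notin> A" u "\<lambda>w. card (pr n E' w)"] u uA
      by blast
    have pu': "pr n E' u' = A"
    proof
      show "A \<subseteq> pr n E' u'" using pref u' unfolding pr_def by blast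
      show "pr n E' u' \<subseteq> A"
      proof
        fix y assume y: "y \<in> pr n E' u'"
        show "y \<in> A"
        proof (rule ccontr)
          assume "y \<notin> A"
          moreover have "y \<in> {1..n}" using y pr_sub by blast
          ultimately have "card (pr n E' u') \<le> card (pr n E' y)" using u'min by blast
          moreover have "card (pr n E' y) < card (pr n E' u')"
            using pr_card_less[OF E'] y unfolding pr_def by blast
          ultimately show False by simp
        qed
      qed
    qed
    have "u' \<noteq> u" using pu' u(2) A_def by auto
    have u'u: "(u', u) \<in> arcs n E'"
    proof -
      have "(u, u') \<notin> arcs n E'" using pu' uA unfolding pr_def by blast
      then show ?thesis using arcs_total u u' \<open>u' \<noteq> u\<close> by blast
    qed
    have uu': "(u, u') \<in> arcs n E"
    proof -
      have "(u', u) \<notin> arcs n E" using u' unfolding A_def pr_def by blast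
      then show ?thesis using arcs_total u u' \<open>u' \<noteq> u\<close> by blast
    qed
    have pu: "{x. (x, u) \<in> arcs n E} = A" unfolding A_def pr_def by simp
    have pu'': "{x. (x, u') \<in> arcs n E'} = A" using pu' unfolding pr_def by simp
    show ?thesis
    proof (cases "u < u'")
      case True
      show ?thesis
        by (rule FalseE, rule inj_core[OF E E' ph A_sub uA conjunct2[OF u'] pu pu'' uu' u'u ord True])
    next
      case False
      then have "u' < u" using \<open>u' \<noteq> u\<close> by simp
      moreover have "\<forall>z\<in>{1..n}. card (Cnt n E' z) = card (Cnt n E z)" using ph by simp
      moreover have "\<forall>x\<in>A. \<forall>y\<in>A. (x, y) \<in> arcs n E' \<longleftrightarrow> (x, y) \<in> arcs n E" using ord by blast
      ultimately show ?thesis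
        using inj_core[OF E' E _ A_sub conjunct2[OF u'] uA pu'' pu u'u uu'] by blast
    qed
  qed
qed

lemma phi_PF:
  assumes E: "pg n E"
  shows "phi n E \<in> parking_functions n"
proof -
  define \<sigma> where "\<sigma> i = (if i \<in> {1..n} then card (pr n E i) + 1 else i)" for i
  have into: "\<sigma> ` {1..n} \<subseteq> {1..n}"
  proof
    fix y assume "y \<in> \<sigma> ` {1..n}"
    then obtain i where i: "i \<in> {1..n}" "y = \<sigma> i" by blast
    have "card (pr n E i) \<le> card ({1..n} - {i})" by (rule card_mono) (use pr_sub[of n E i] in auto)
    also have "\<dots> = n - 1" using i by simp
    finally show "y \<in> {1..n}" using i unfolding \<sigma>_def by auto
  qed
  have inj: "inj_on \<sigma> {1..n}"
  proof (rule inj_onI)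
    fix x y assume xy: "x \<in> {1..n}" "y \<in> {1..n}" "\<sigma> x = \<sigma> y"
    show "x = y"
    proof (rule ccontr)
      assume "x \<noteq> y"
      then have "(x, y) \<in> arcs n E \<or> (y, x) \<in> arcs n E" using arcs_total xy by blast
      then have "card (pr n E x) \<noteq> card (pr n E y)"
        using pr_card_less[OF E, of x y] pr_card_less[OF E, of y x] by auto
      then show False using xy unfolding \<sigma>_def by simp
    qed
  qed
  have "\<sigma> ` {1..n} = {1..n}" by (rule endo_inj_surj) (use into inj in auto)
  then have "bij_betw \<sigma> {1..n} {1..n}" using inj unfolding bij_betw_def by simp
  then have perm: "\<sigma> permutes {1..n}" by (rule bij_imp_permutes) (auto simp: \<sigma>_def)
  have le: "phi n E i \<le> \<sigma> i" if "i \<in> {1..n}" for i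
  proof -
    have "Cnt n E i \<subseteq> pr n E i" unfolding Cnt_def pr_def by auto
    then have "card (Cnt n E i) \<le> card (pr n E i)" by (rule card_mono[OF pr_finite])
    then show ?thesis using that phi_Cnt[OF that] unfolding \<sigma>_def by simp
  qed
  show ?thesis unfolding parking_functions_def
    using perm le by (auto simp: phi_def)
qed

definition sm :: "(nat \<Rightarrow> nat) \<Rightarrow> nat \<Rightarrow> nat \<Rightarrow> nat" where
  "sm g i w = card {j. j < i \<and> g j < w}"
definition lg :: "(nat \<Rightarrow> nat) \<Rightarrow> nat \<Rightarrow> nat \<Rightarrow> nat" where
  "lg g m w = card {j. j < m \<and> w < g j}"
definition cand :: "(nat \<Rightarrow> nat) \<Rightarrow> (nat \<Rightarrow> nat) \<Rightarrow> nat \<Rightarrow> nat \<Rightarrow> bool" where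
  "cand a g i w \<longleftrightarrow> sm g i w + 1 \<le> a w \<and> a w \<le> sm g i w + lg g i w + 1"
definition cut :: "(nat \<Rightarrow> nat) \<Rightarrow> (nat \<Rightarrow> nat) \<Rightarrow> nat \<Rightarrow> nat \<Rightarrow> nat" where
  "cut a g i w = (LEAST m. a w \<le> sm g i w + lg g (min m i) w + 1)"
definition better :: "(nat \<Rightarrow> nat) \<Rightarrow> (nat \<Rightarrow> nat) \<Rightarrow> nat \<Rightarrow> nat \<Rightarrow> nat \<Rightarrow> bool" where
  "better a g i u w \<longleftrightarrow> cut a g i u < cut a g i w \<or> (cut a g i u = cut a g i w \<and> w < u)"
definition Inv :: "nat \<Rightarrow> (nat \<Rightarrow> nat) \<Rightarrow> nat \<Rightarrow> (nat \<Rightarrow> nat) \<Rightarrow> bool" where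
  "Inv n a t g \<longleftrightarrow> inj_on g {..<t} \<and> g ` {..<t} \<subseteq> {1..n} \<and>
     (\<forall>i<t. cand a g i (g i) \<and> (\<forall>w\<in>{1..n} - g ` {..<Suc i}. cand a g i w \<longrightarrow> better a g i (g i) w))"

lemma sm_cong: "(\<And>j. j < i \<Longrightarrow> g j = g' j) \<Longrightarrow> sm g i w = sm g' i w"
  unfolding sm_def by (metis (no_types, lifting) Collect_cong)
lemma lg_cong: "(\<And>j. j < m \<Longrightarrow> g j = g' j) \<Longrightarrow> lg g m w = lg g' m w"
  unfolding lg_def by (metis (no_types, lifting) Collect_cong)

lemma cand_cong: "(\<And>j. j < i \<Longrightarrow> g j = g' j) \<Longrightarrow> cand a g i w = cand a g' i w"
  unfolding cand_def using sm_cong[of i g g' w] lg_cong[of i g g' w] by simp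

lemma cut_cong: "(\<And>j. j < i \<Longrightarrow> g j = g' j) \<Longrightarrow> cut a g i w = cut a g' i w"
proof -
  assume h: "\<And>j. j < i \<Longrightarrow> g j = g' j"
  have "\<And>m. lg g (min m i) w = lg g' (min m i) w" by (rule lg_cong) (simp add: h)
  then show ?thesis unfolding cut_def using sm_cong[of i g g' w, OF h] by simp
qed

lemma better_cong: "(\<And>j. j < i \<Longrightarrow> g j = g' j) \<Longrightarrow> better a g i u w = better a g' i u w"
  unfolding better_def using cut_cong[of i g g'] by simp

lemma sm_Suc: "sm g (Suc i) w = sm g i w + (if g i < w then 1 else 0)"
proof -
  have "{j. j < Suc i \<and> g j < w} = {j. j < i \<and> g j < w} \<union> (if g i < w then {i} else {})"
    by (auto simp: less_Suc_eq)
  then show ?thesis unfolding sm_def by (auto simp: card_insert_if)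
qed

lemma lg_Suc: "lg g (Suc i) w = lg g i w + (if w < g i then 1 else 0)"
proof -
  have "{j. j < Suc i \<and> w < g j} = {j. j < i \<and> w < g j} \<union> (if w < g i then {i} else {})"
    by (auto simp: less_Suc_eq)
  then show ?thesis unfolding lg_def by (auto simp: card_insert_if)
qed

lemma lg_mono: "m \<le> m' \<Longrightarrow> lg g m w \<le> lg g m' w"
  unfolding lg_def by (rule card_mono) auto

lemma sm_mono: "m \<le> m' \<Longrightarrow> sm g m w \<le> sm g m' w"
  unfolding sm_def by (rule card_mono) auto

lemma lg_0[simp]: "lg g 0 w = 0" unfolding lg_def by simp
lemma sm_0[simp]: "sm g 0 w = 0" unfolding sm_def by simp

lemma sm_lg_unplaced:
  assumes "w \<notin> g ` {..<i}"
  shows "sm g i w + lg g i w = i"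
proof -
  have ne: "g x \<noteq> w" if "x < i" for x using assms that by blast
  have "{j. j < i \<and> g j < w} \<union> {j. j < i \<and> w < g j} = {..<i}"
  proof (rule set_eqI)
    fix x show "x \<in> {j. j < i \<and> g j < w} \<union> {j. j < i \<and> w < g j} \<longleftrightarrow> x \<in> {..<i}"
      using ne[of x] by (cases "g x < w") auto
  qed
  moreover have "{j. j < i \<and> g j < w} \<inter> {j. j < i \<and> w < g j} = {}" by auto
  moreover have "finite {j. j < i \<and> g j < w}" "finite {j. j < i \<and> w < g j}" by auto
  ultimately have "card {..<i} = card {j. j < i \<and> g j < w} + card {j. j < i \<and> w < g j}"
    using card_Un_disjoint by metis
  then show ?thesis unfolding sm_def lg_def by simp
qed

lemma cut_holds:
  assumes "cand a g i w"
  shows "a w \<le> sm g i w + lg g (min (cut a g i w) i) w + 1"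
  unfolding cut_def by (rule LeastI[of _ i]) (use assms in \<open>simp add: cand_def\<close>)

lemma cut_le:
  assumes "cand a g i w"
  shows "cut a g i w \<le> i"
  unfolding cut_def by (rule Least_le) (use assms in \<open>simp add: cand_def\<close>)

lemma cut_fails:
  assumes "m < cut a g i w"
  shows "\<not> a w \<le> sm g i w + lg g (min m i) w + 1"
  using assms unfolding cut_def by (rule not_less_Least)

lemma nonneg:
  assumes I: "Inv n a t g" and pos: "\<forall>w\<in>{1..n}. 1 \<le> a w"
  shows "i \<le> t \<Longrightarrow> w \<in> {1..n} - g ` {..<i} \<Longrightarrow> sm g i w + 1 \<le> a w"
proof (induction i arbitrary: w)
  case 0
  then show ?case using pos by simp
next
  case (Suc i)
  have it: "i < t" using Suc.prems by simp
  have w: "w \<in> {1..n}" "w \<notin> g ` {..<i}" "w \<noteq> g i" using Suc.prems by (auto simp: lessThan_Suc)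
  have IH: "sm g i w + 1 \<le> a w" using Suc.IH it w by simp
  show ?case
  proof (cases "g i < w")
    case False
    then show ?thesis using IH sm_Suc[of g i w] by simp
  next
    case True
    show ?thesis
    proof (rule ccontr)
      assume "\<not> sm g (Suc i) w + 1 \<le> a w"
      then have eq: "a w = sm g i w + 1" using IH sm_Suc[of g i w] True by simp
      have c: "cand a g i w" unfolding cand_def using eq by simp
      have "w \<in> {1..n} - g ` {..<Suc i}" using Suc.prems by simp
      then have b: "better a g i (g i) w" using I it c unfolding Inv_def by blast
      have "cut a g i w = 0" unfolding cut_def using eq by (intro Least_eq_0) simp
      then show False using b True unfolding better_def by simp
    qed
  qed
qed

lemma PF_many:
  assumes a: "a \<in> parking_functions n" and t: "t < n"
  shows "t + 1 \<le> card {w\<in>{1..n}. a w \<le> t + 1}"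
proof -
  obtain \<sigma> where \<sigma>: "\<sigma> permutes {1..n}" "\<forall>i\<in>{1..n}. a i \<le> \<sigma> i"
    using a unfolding parking_functions_def by blast
  have bij: "bij_betw \<sigma> {1..n} {1..n}" using \<sigma>(1) by (rule permutes_imp_bij)
  define M where "M = {w\<in>{1..n}. \<sigma> w \<le> t + 1}"
  have "\<sigma> ` M = {1..t+1}"
  proof
    show "\<sigma> ` M \<subseteq> {1..t+1}" using bij unfolding M_def bij_betw_def by auto
    show "{1..t+1} \<subseteq> \<sigma> ` M"
    proof
      fix y assume y: "y \<in> {1..t+1}"
      then have "y \<in> {1..n}" using t by auto
      then have "y \<in> \<sigma> ` {1..n}" using bij unfolding bij_betw_def by simp
      then obtain x where "x \<in> {1..n}" "\<sigma> x = y" by blast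
      then show "y \<in> \<sigma> ` M" using y unfolding M_def by auto
    qed
  qed
  moreover have "inj_on \<sigma> M" using bij unfolding bij_betw_def M_def by (auto intro: inj_on_subset)
  ultimately have "card M = t + 1" using card_image by fastforce
  moreover have "M \<subseteq> {w\<in>{1..n}. a w \<le> t + 1}" using \<sigma>(2) unfolding M_def by force
  ultimately show ?thesis using card_mono[of "{w\<in>{1..n}. a w \<le> t + 1}" M] by simp
qed

lemma extend:
  assumes I: "Inv n a t g" and a: "a \<in> parking_functions n" and t: "t < n"
  shows "\<exists>g'. Inv n a (Suc t) g'"
proof -
  have pos: "\<forall>w\<in>{1..n}. 1 \<le> a w" using a unfolding parking_functions_def by auto
  define C where "C = {w\<in>{1..n} - g ` {..<t}. cand a g t w}"
  have "\<not> {w\<in>{1..n}. a w \<le> t + 1} \<subseteq> g ` {..<t}"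
  proof
    assume "{w\<in>{1..n}. a w \<le> t + 1} \<subseteq> g ` {..<t}"
    then have "card {w\<in>{1..n}. a w \<le> t + 1} \<le> card (g ` {..<t})" by (rule card_mono[rotated]) simp
    also have "\<dots> \<le> t" using card_image_le[of "{..<t}" g] by simp
    finally show False using PF_many[OF a t] by simp
  qed
  then obtain w where w: "w \<in> {1..n}" "a w \<le> t + 1" "w \<notin> g ` {..<t}" by blast
  have "cand a g t w"
    using nonneg[OF I pos, of t w] w sm_lg_unplaced[OF w(3)] unfolding cand_def by simp
  then have Cne: "C \<noteq> {}" using w unfolding C_def by blast
  have Cfin: "finite C" unfolding C_def by simp
  define c0 where "c0 = Min (cut a g t ` C)"
  define C0 where "C0 = {w\<in>C. cut a g t w = c0}"
  have "c0 \<in> cut a g t ` C" unfolding c0_def using Cne Cfin by simp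
  then have C0ne: "C0 \<noteq> {}" unfolding C0_def by auto
  have C0fin: "finite C0" using Cfin unfolding C0_def by simp
  define w0 where "w0 = Max C0"
  have w0C0: "w0 \<in> C0" unfolding w0_def using C0ne C0fin by simp
  then have w0C: "w0 \<in> C" unfolding C0_def by simp
  have w0best: "better a g t w0 w" if "w \<in> C" "w \<noteq> w0" for w
  proof -
    have "c0 \<le> cut a g t w" unfolding c0_def using that Cfin by simp
    moreover have "cut a g t w0 = c0" using w0C0 unfolding C0_def by simp
    moreover have "cut a g t w = c0 \<Longrightarrow> w < w0"
    proof -
      assume "cut a g t w = c0"
      then have "w \<in> C0" using that unfolding C0_def by simp
      then have "w \<le> w0" unfolding w0_def using C0fin by simp
      then show "w < w0" using that by simp
    qed
    ultimately show ?thesis unfolding better_def by auto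
  qed
  define g' where "g' = g(t := w0)"
  have agree: "\<And>j. j < t \<Longrightarrow> g' j = g j" unfolding g'_def by simp
  have img: "g' ` {..<t} = g ` {..<t}" using agree by (auto simp: image_iff)
  have "Inv n a (Suc t) g'"
    unfolding Inv_def
  proof (intro conjI allI impI ballI)
    have "inj_on g' {..<t}" using I agree unfolding Inv_def by (metis inj_on_cong lessThan_iff)
    moreover have "g' t \<notin> g' ` {..<t}" using w0C img unfolding C_def g'_def by simp
    ultimately show "inj_on g' {..<Suc t}" by (simp add: lessThan_Suc)
    show "g' ` {..<Suc t} \<subseteq> {1..n}" using I img w0C unfolding Inv_def C_def g'_def
      by (auto simp: lessThan_Suc)
  next
    fix i assume i: "i < Suc t"
    show "cand a g' i (g' i)"
    proof (cases "i = t")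
      case True
      have "cand a g' t w0 = cand a g t w0" by (rule cand_cong) (simp add: agree)
      then show ?thesis using w0C True unfolding C_def g'_def by simp
    next
      case False
      then have it: "i < t" using i by simp
      have "cand a g' i (g i) = cand a g i (g i)" by (rule cand_cong) (use agree it in simp)
      then show ?thesis using I it agree unfolding Inv_def by simp
    qed
  next
    fix i w assume i: "i < Suc t" and wm: "w \<in> {1..n} - g' ` {..<Suc i}" and c: "cand a g' i w"
    show "better a g' i (g' i) w"
    proof (cases "i = t")
      case True
      have cc: "cand a g t w" using c True cand_cong[of t g' g a w] agree by simp
      have "w \<notin> g ` {..<t}" "w \<noteq> w0" using wm True img unfolding g'_def by (auto simp: lessThan_Suc)
      then have "better a g t w0 w" using w0best cc wm unfolding C_def by simp
      moreover have "better a g' t w0 w = better a g t w0 w" by (rule better_cong) (simp add: agree)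
      ultimately show ?thesis using True unfolding g'_def by simp
    next
      case False
      then have it: "i < t" using i by simp
      have ag: "\<And>j. j < Suc i \<Longrightarrow> g' j = g j" using agree it by simp
      have "g' ` {..<Suc i} = g ` {..<Suc i}" using ag by (auto simp: image_iff)
      then have "w \<in> {1..n} - g ` {..<Suc i}" using wm by simp
      moreover have "cand a g i w" using c cand_cong[of i g' g a w] ag by simp
      ultimately have "better a g i (g i) w" using I it unfolding Inv_def by blast
      moreover have "better a g' i (g i) w = better a g i (g i) w" by (rule better_cong) (simp add: ag)
      ultimately show ?thesis using ag by simp
    qed
  qed
  then show ?thesis by blast
qed

lemma exists_Inv:
  assumes a: "a \<in> parking_functions n"
  shows "t \<le> n \<Longrightarrow> \<exists>g. Inv n a t g"
proof (induction t)
  case 0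
  show ?case unfolding Inv_def by simp
next
  case (Suc t)
  then obtain g where "Inv n a t g" by auto
  then show ?case using extend[OF _ a] Suc.prems by simp
qed

definition Dc :: "(nat \<Rightarrow> nat) \<Rightarrow> (nat \<Rightarrow> nat) \<Rightarrow> nat \<Rightarrow> nat \<Rightarrow> bool" where
  "Dc a g l m \<longleftrightarrow> sm g m (g m) + lg g (Suc l) (g m) + 1 \<le> a (g m)"

lemma dIVT:
  fixes f :: "nat \<Rightarrow> nat"
  shows "lo \<le> hi \<Longrightarrow> f lo \<le> c \<Longrightarrow> c < f hi \<Longrightarrow> \<exists>m. lo \<le> m \<and> m < hi \<and> f m \<le> c \<and> c < f (Suc m)"
proof (induction hi)
  case 0
  then show ?case by simp
next
  case (Suc hi)
  show ?case
  proof (cases "f hi \<le> c")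
    case True
    have "lo \<noteq> Suc hi" using Suc.prems by auto
    then have "lo \<le> hi" using Suc.prems by simp
    then show ?thesis using Suc.prems True by (intro exI[of _ hi]) simp
  next
    case False
    have "lo \<noteq> Suc hi" using Suc.prems by auto
    then have "lo \<le> hi" using Suc.prems by simp
    then obtain m where "lo \<le> m \<and> m < hi \<and> f m \<le> c \<and> c < f (Suc m)"
      using Suc.IH Suc.prems False by auto
    then show ?thesis by (intro exI[of _ m]) simp
  qed
qed

lemma tri_main:
  assumes I: "Inv n a n g" and pos: "\<forall>w\<in>{1..n}. 1 \<le> a w"
  shows "lx < ly \<Longrightarrow> ly < lz \<Longrightarrow> lz < n \<Longrightarrow> g ly < g lx \<Longrightarrow> g lz < g lx \<Longrightarrow>
         \<not> Dc a g lx lz \<Longrightarrow> Dc a g lx ly \<Longrightarrow> False"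
proof (induction lz arbitrary: ly rule: less_induct)
  case (less lz)
  define X where "X = g lx"
  define Y where "Y = g ly"
  define Z where "Z = g lz"
  have inj: "inj_on g {..<n}" and rng: "g ` {..<n} \<subseteq> {1..n}"
    and IC: "\<And>i. i < n \<Longrightarrow> cand a g i (g i)"
    and IB: "\<And>i w. i < n \<Longrightarrow> w \<in> {1..n} - g ` {..<Suc i} \<Longrightarrow> cand a g i w \<Longrightarrow> better a g i (g i) w"
    using I unfolding Inv_def by auto
  have YX: "Y < X" and ZX: "Z < X" using less.prems unfolding X_def Y_def Z_def by auto
  have Zn: "Z \<in> {1..n}" using rng less.prems unfolding Z_def by auto
  have Zunpl: "Z \<notin> g ` {..<Suc m}" if "m < lz" for m
  proof
    assume "Z \<in> g ` {..<Suc m}"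
    then obtain j where "j < Suc m" "g j = g lz" unfolding Z_def by auto
    moreover have "j \<in> {..<n}" "lz \<in> {..<n}" using \<open>j < Suc m\<close> that less.prems by auto
    ultimately have "j = lz" using inj_onD[OF inj] by metis
    then show False using \<open>j < Suc m\<close> that by simp
  qed
  \<comment> \<open>(A): x is virtually a Down for Z at time ly\<close>
  have A: "sm g ly Z + lg g (Suc lx) Z + 1 \<le> a Z"
  proof (cases "cand a g ly Z")
    case True
    have lyn: "ly < n" using less.prems by simp
    have b: "better a g ly Y Z" using IB[OF lyn _ True] Zunpl[of ly] Zn less.prems unfolding Y_def by simp
    have cY: "cand a g ly Y" using IC[OF lyn] unfolding Y_def by simp
    have DY: "sm g ly Y + lg g (Suc lx) Y + 1 \<le> a Y" using less.prems unfolding Dc_def Y_def by simp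
    have lgY: "lg g (Suc lx) Y = lg g lx Y + 1" using lg_Suc[of g lx Y] YX unfolding X_def by simp
    have "lx < cut a g ly Y"
    proof (rule ccontr)
      assume "\<not> lx < cut a g ly Y"
      then have "min (cut a g ly Y) ly \<le> lx" by simp
      then have "lg g (min (cut a g ly Y) ly) Y \<le> lg g lx Y" by (rule lg_mono)
      then show False using cut_holds[OF cY] DY lgY by simp
    qed
    then have "lx < cut a g ly Z" using b unfolding better_def by auto
    then have "\<not> a Z \<le> sm g ly Z + lg g (min lx ly) Z + 1" by (rule cut_fails)
    moreover have "min lx ly = lx" using less.prems by simp
    moreover have "lg g (Suc lx) Z = lg g lx Z + 1" using lg_Suc[of g lx Z] ZX unfolding X_def by simp
    ultimately show ?thesis by simp
  next
    case False
    have "sm g ly Z + 1 \<le> a Z" using nonneg[OF I pos, of ly Z] Zunpl[of ly] Zn less.prems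
      by (auto simp: lessThan_Suc)
    then have "\<not> a Z \<le> sm g ly Z + lg g ly Z + 1" using False unfolding cand_def by simp
    moreover have "lg g (Suc lx) Z \<le> lg g ly Z" using less.prems by (intro lg_mono) simp
    ultimately show ?thesis by simp
  qed
  have B: "\<not> sm g lz Z + lg g (Suc lx) Z + 1 \<le> a Z" using less.prems unfolding Dc_def Z_def by simp
  define h where "h m = sm g m Z + lg g (Suc lx) Z + 1" for m
  obtain m0 where m0: "ly \<le> m0" "m0 < lz" "h m0 \<le> a Z" "a Z < h (Suc m0)"
  proof -
    have "\<exists>m. ly \<le> m \<and> m < lz \<and> h m \<le> a Z \<and> a Z < h (Suc m)"
      by (rule dIVT) (use A B less.prems in \<open>simp_all add: h_def\<close>)
    then show ?thesis using that by blast
  qed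
  define W where "W = g m0"
  have hs: "h (Suc m0) = h m0 + (if W < Z then 1 else 0)"
    unfolding h_def W_def using sm_Suc[of g m0 Z] by simp
  have WZ: "W < Z"
  proof (rule ccontr)
    assume "\<not> W < Z"
    then show False using hs m0 by simp
  qed
  have hm0: "h m0 = a Z" using hs WZ m0 by simp
  have m0n: "m0 < n" using m0 less.prems by simp
  have lxm0: "Suc lx \<le> m0" using m0 less.prems by simp
  have cZ: "cand a g m0 Z"
    unfolding cand_def using hm0 lg_mono[OF lxm0, of g Z] unfolding h_def by simp
  have cutZ: "cut a g m0 Z = Suc lx"
  proof (rule antisym)
    show "cut a g m0 Z \<le> Suc lx" unfolding cut_def
      by (rule Least_le) (use hm0 lxm0 in \<open>simp add: h_def min_def\<close>)
    show "Suc lx \<le> cut a g m0 Z"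
    proof (rule ccontr)
      assume "\<not> Suc lx \<le> cut a g m0 Z"
      then have "min (cut a g m0 Z) m0 \<le> lx" by simp
      then have "lg g (min (cut a g m0 Z) m0) Z \<le> lg g lx Z" by (rule lg_mono)
      moreover have "lg g (Suc lx) Z = lg g lx Z + 1" using lg_Suc[of g lx Z] ZX unfolding X_def by simp
      ultimately show False using cut_holds[OF cZ] hm0 unfolding h_def by simp
    qed
  qed
  have "better a g m0 W Z" using IB[OF m0n _ cZ] Zunpl[OF m0(2)] Zn unfolding W_def by simp
  then have cutW: "cut a g m0 W \<le> lx" using cutZ WZ unfolding better_def by auto
  have cW: "cand a g m0 W" using IC[OF m0n] unfolding W_def by simp
  have nD: "\<not> Dc a g lx m0"
  proof
    assume "Dc a g lx m0"
    then have D: "sm g m0 W + lg g (Suc lx) W + 1 \<le> a W" unfolding Dc_def W_def by simp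
    have "lg g (min (cut a g m0 W) m0) W \<le> lg g lx W" using cutW by (intro lg_mono) simp
    moreover have "lg g (Suc lx) W = lg g lx W + 1" using lg_Suc[of g lx W] ZX WZ unfolding X_def by simp
    ultimately show False using cut_holds[OF cW] D by simp
  qed
  show False
  proof (cases "m0 = ly")
    case True
    then show False using nD less.prems by simp
  next
    case False
    then have "ly < m0" using m0 by simp
    moreover have "g m0 < g lx" using WZ ZX unfolding W_def X_def Z_def by simp
    ultimately show False using less.IH[OF m0(2), of ly] less.prems m0n nD by simp
  qed
qed

lemma tri_from_order:
  fixes p :: "nat \<Rightarrow> nat"
  assumes arcs: "\<And>x y. (x, y) \<in> arcs n E \<longleftrightarrow> x \<in> {1..n} \<and> y \<in> {1..n} \<and> p x < p y"
    and pinj: "inj_on p {1..n}"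
    and H: "\<And>x y z. x \<in> {1..n} \<Longrightarrow> y \<in> {1..n} \<Longrightarrow> z \<in> {1..n} \<Longrightarrow> p x < p y \<Longrightarrow> p y < p z \<Longrightarrow>
              etype E x z = Downish \<Longrightarrow> etype E x y \<noteq> Down \<and> etype E y z \<noteq> Down"
  shows "triangle_cond n E"
  unfolding triangle_cond_def Let_def
proof (intro ballI impI allI, elim conjE)
  fix a b c s t
  assume abc: "a \<in> {1..n}" "b \<in> {1..n}" "c \<in> {1..n}" "a \<noteq> b" "b \<noteq> c" "a \<noteq> c"
    and Dn: "Down \<in> {etype E a b, etype E b c, etype E a c}"
    and st: "s \<in> {a, b, c}" "t \<in> {a, b, c}"
    and src: "\<forall>u\<in>{a, b, c}. (u, s) \<notin> arcs n E" and snk: "\<forall>u\<in>{a, b, c}. (t, u) \<notin> arcs n E"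
    and "s \<noteq> t"
  show "etype E s t \<noteq> Downish"
  proof
    assume W: "etype E s t = Downish"
    have T: "{a, b, c} \<subseteq> {1..n}" using abc by auto
    have ps: "\<forall>u\<in>{a,b,c}. \<not> p u < p s" using src T st by (auto simp: arcs)
    have pt: "\<forall>u\<in>{a,b,c}. \<not> p t < p u" using snk T st by (auto simp: arcs)
    have pne: "u \<in> {a,b,c} \<Longrightarrow> v \<in> {a,b,c} \<Longrightarrow> u \<noteq> v \<Longrightarrow> p u \<noteq> p v" for u v
      using pinj T by (meson inj_onD subsetD)
    obtain m where m: "m \<in> {a,b,c}" "m \<noteq> s" "m \<noteq> t" using abc \<open>s \<noteq> t\<close> by blast
    have T3: "{a,b,c} = {s, m, t}" using abc st m \<open>s \<noteq> t\<close> by blast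
    have o1: "p s < p m"
    proof -
      have "\<not> p m < p s" using ps m(1) by blast
      moreover have "p m \<noteq> p s" using pne[OF m(1) st(1) m(2)] .
      ultimately show ?thesis by simp
    qed
    have o2: "p m < p t"
    proof -
      have "\<not> p t < p m" using pt m(1) by blast
      moreover have "p m \<noteq> p t" using pne[OF m(1) st(2) m(3)] .
      ultimately show ?thesis by simp
    qed
    have sm_t: "s \<in> {1..n}" "m \<in> {1..n}" "t \<in> {1..n}" using T st m by auto
    have nd: "etype E s m \<noteq> Down" "etype E m t \<noteq> Down"
      using H[OF sm_t o1 o2 W] by auto
    have all: "etype E u v \<noteq> Down" if "u \<in> {s,m,t}" "v \<in> {s,m,t}" "u \<noteq> v" for u v
      using that nd W etype_sym[of s m E] etype_sym[of m t E] etype_sym[of s t E] by auto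
    have "etype E a b \<noteq> Down" "etype E b c \<noteq> Down" "etype E a c \<noteq> Down"
      using all T3 abc by auto
    then show False using Dn by auto
  qed
qed

lemma count_prefix:
  "card {l. l < m \<and> P l \<and> card {l'. l' < Suc l \<and> P l'} \<le> K} = min K (card {l. l < m \<and> P l})"
proof (induction m)
  case 0
  then show ?case by simp
next
  case (Suc m)
  have c: "card {l'. l' < Suc m \<and> P l'} = card {l. l < m \<and> P l} + (if P m then 1 else 0)"
  proof -
    have "{l'. l' < Suc m \<and> P l'} = {l. l < m \<and> P l} \<union> (if P m then {m} else {})"
      by (auto simp: less_Suc_eq)
    then show ?thesis by (auto simp: card_insert_if)
  qed
  have "{l. l < Suc m \<and> P l \<and> card {l'. l' < Suc l \<and> P l'} \<le> K} =
        {l. l < m \<and> P l \<and> card {l'. l' < Suc l \<and> P l'} \<le> K} \<union>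
        (if P m \<and> card {l'. l' < Suc m \<and> P l'} \<le> K then {m} else {})"
    by (auto simp: less_Suc_eq)
  then have "card {l. l < Suc m \<and> P l \<and> card {l'. l' < Suc l \<and> P l'} \<le> K} =
     card {l. l < m \<and> P l \<and> card {l'. l' < Suc l \<and> P l'} \<le> K} +
        (if P m \<and> card {l'. l' < Suc m \<and> P l'} \<le> K then 1 else 0)"
    by (auto simp: card_insert_if)
  then show ?case using Suc.IH c by auto
qed

lemma surj_PF:
  assumes a: "a \<in> parking_functions n"
  shows "\<exists>E\<in>parking_graphs n. phi n E = a"
proof -
  have pos: "\<forall>w\<in>{1..n}. 1 \<le> a w" and a0: "\<forall>i. i \<notin> {1..n} \<longrightarrow> a i = 0"
    using a unfolding parking_functions_def by auto
  obtain g where I: "Inv n a n g" using exists_Inv[OF a, of n] by blast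
  have inj: "inj_on g {..<n}" and rng: "g ` {..<n} \<subseteq> {1..n}"
    and IC: "\<And>i. i < n \<Longrightarrow> cand a g i (g i)"
    using I unfolding Inv_def by auto
  have img: "g ` {..<n} = {1..n}"
  proof (rule card_subset_eq[OF _ rng])
    show "finite {1..n}" by simp
    show "card (g ` {..<n}) = card {1..n}" using card_image[OF inj] by simp
  qed
  define p where "p = the_inv_into {..<n} g"
  have bij: "bij_betw g {..<n} {1..n}" using inj img unfolding bij_betw_def by simp
  have gp: "p v < n" "g (p v) = v" if "v \<in> {1..n}" for v
    using that bij_betwE[OF bij_betw_the_inv_into[OF bij]] f_the_inv_into_f_bij_betw[OF bij]
    unfolding p_def by auto
  have pg: "p (g l) = l" if "l < n" for l
    using the_inv_into_f_f[OF inj] that unfolding p_def by simp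
  have pinj: "inj_on p {1..n}" by (metis gp(2) inj_onI)
  define E where "E j k = (if (j, k) \<in> edge_pairs n then
      (if p j < p k then Up else if Dc a g (p k) (p j) then Down else Downish) else Down)" for j k
  have Ejk: "E j k = (if p j < p k then Up else if Dc a g (p k) (p j) then Down else Downish)"
    if "j \<in> {1..n}" "k \<in> {1..n}" "j < k" for j k
    using that unfolding E_def edge_pairs_def by auto
  have et: "etype E x y = (if x < y then
      (if p x < p y then Up else if Dc a g (p y) (p x) then Down else Downish)
      else (if p y < p x then Up else if Dc a g (p x) (p y) then Down else Downish))"
    if "x \<in> {1..n}" "y \<in> {1..n}" "x \<noteq> y" for x y
    using that Ejk[of x y] Ejk[of y x] unfolding etype_def by auto
  have pne: "p x \<noteq> p y" if "x \<in> {1..n}" "y \<in> {1..n}" "x \<noteq> y" for x y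
    using that gp by metis
  have arcs: "(x, y) \<in> arcs n E \<longleftrightarrow> x \<in> {1..n} \<and> y \<in> {1..n} \<and> p x < p y" for x y
  proof (cases "x \<in> {1..n} \<and> y \<in> {1..n} \<and> x \<noteq> y")
    case True
    then show ?thesis unfolding arcs_iff using et[of x y] pne[of x y] by (auto split: if_splits)
  next
    case False
    then show ?thesis unfolding arcs_iff by auto
  qed
  have acyc: "acyclic (arcs n E)"
  proof -
    have "arcs n E \<subseteq> measure p" using arcs by auto
    then have "wf (arcs n E)" using wf_subset wf_measure by blast
    then show ?thesis by (rule wf_acyclic)
  qed
  have tri: "triangle_cond n E"
  proof (rule tri_from_order[OF arcs pinj])
    fix x y z assume xyz: "x \<in> {1..n}" "y \<in> {1..n}" "z \<in> {1..n}" "p x < p y" "p y < p z"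
      and W: "etype E x z = Downish"
    have ne: "x \<noteq> y" "y \<noteq> z" "x \<noteq> z" using xyz by auto
    have xz: "z < x" using W et[OF xyz(1,3) ne(3)] xyz ne by (auto split: if_splits)
    have nDxz: "\<not> Dc a g (p x) (p z)" using W et[OF xyz(1,3) ne(3)] xyz xz by (auto split: if_splits)
    have l: "p x < n" "p y < n" "p z < n" using gp xyz by auto
    have "etype E y z \<noteq> Down"
    proof
      assume D: "etype E y z = Down"
      then have "z < y" using et[OF xyz(2,3) ne(2)] xyz ne by (auto split: if_splits)
      then have "Dc a g (p y) (p z)" using D et[OF xyz(2,3) ne(2)] xyz by (auto split: if_splits)
      then have "Dc a g (p x) (p z)" unfolding Dc_def
        using lg_mono[of "Suc (p x)" "Suc (p y)" g "g (p z)"] xyz by simp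
      then show False using nDxz by simp
    qed
    moreover have "etype E x y \<noteq> Down"
    proof
      assume D: "etype E x y = Down"
      then have yx: "y < x" using et[OF xyz(1,2) ne(1)] xyz ne by (auto split: if_splits)
      then have Dxy: "Dc a g (p x) (p y)" using D et[OF xyz(1,2) ne(1)] xyz by (auto split: if_splits)
      show False
        using tri_main[OF I pos xyz(4) xyz(5) l(3)] gp xyz yx xz nDxz Dxy by simp
    qed
    ultimately show "etype E x y \<noteq> Down \<and> etype E y z \<noteq> Down" by simp
  qed
  have PG: "E \<in> parking_graphs n"
    unfolding parking_graphs_def using acyc tri by (auto simp: E_def)
  have "phi n E i = a i" for i
  proof (cases "i \<in> {1..n}")
    case False
    then show ?thesis using a0 unfolding phi_def by simp
  next
    case True
    define m where "m = p i"
    have m: "m < n" "g m = i" using gp[OF True] unfolding m_def by auto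
    define L where "L = {l. l < m \<and> (g l < i \<or> (i < g l \<and> Dc a g l m))}"
    have CL: "Cnt n E i = g ` L"
    proof (rule set_eqI, rule iffI)
      fix u assume u: "u \<in> Cnt n E i"
      then have u1: "u \<in> {1..n}" "u \<noteq> i" "(u, i) \<in> arcs n E" "etype E u i \<noteq> Downish"
        unfolding Cnt_def by auto
      have pu: "p u < m" using u1 arcs unfolding m_def by auto
      have "g (p u) < i \<or> (i < g (p u) \<and> Dc a g (p u) m)"
      proof (cases "u < i")
        case True
        then show ?thesis using gp[OF u1(1)] by simp
      next
        case False
        then have "i < u" using u1 by simp
        then show ?thesis using u1(4) et[OF u1(1) \<open>i \<in> {1..n}\<close> u1(2)] gp[OF u1(1)] pu
          unfolding m_def by (auto split: if_splits)
      qed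
      then have "p u \<in> L" using pu unfolding L_def by simp
      then show "u \<in> g ` L" using gp[OF u1(1)] by (metis image_eqI)
    next
      fix u assume "u \<in> g ` L"
      then obtain l where l: "l \<in> L" "u = g l" by blast
      have ln: "l < n" "l < m" using l m unfolding L_def by auto
      have u1: "u \<in> {1..n}" using rng l ln by auto
      have pu: "p u = l" using pg[OF ln(1)] l by simp
      have ui: "u \<noteq> i" using pu ln unfolding m_def by auto
      have ar: "(u, i) \<in> arcs n E" using arcs u1 True pu ln unfolding m_def by simp
      have "etype E u i \<noteq> Downish"
        using l et[OF u1 True ui] pu ln unfolding L_def m_def by (auto split: if_splits)
      then show "u \<in> Cnt n E i" using u1 ui ar unfolding Cnt_def by simp
    qed
    have "inj_on g L" using inj by (rule inj_on_subset) (use m(1) in \<open>auto simp: L_def\<close>)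
    then have cC: "card (Cnt n E i) = card L" using CL card_image by simp
    have Lsplit: "L = {l. l < m \<and> g l < i} \<union> {l. l < m \<and> i < g l \<and> Dc a g l m}"
      unfolding L_def by auto
    have disj: "{l. l < m \<and> g l < i} \<inter> {l. l < m \<and> i < g l \<and> Dc a g l m} = {}" by auto
    have cL: "card L = sm g m i + card {l. l < m \<and> i < g l \<and> Dc a g l m}"
      unfolding Lsplit sm_def by (rule card_Un_disjoint) (use disj in auto)
    have c: "cand a g m i" using IC[OF m(1)] m by simp
    define K where "K = a i - (sm g m i + 1)"
    have Dc_iff: "Dc a g l m \<longleftrightarrow> card {l'. l' < Suc l \<and> i < g l'} \<le> K" for l
      using c unfolding Dc_def K_def cand_def lg_def m(2) by auto
    have "card {l. l < m \<and> i < g l \<and> Dc a g l m} = min K (card {l. l < m \<and> i < g l})"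
      unfolding Dc_iff by (rule count_prefix)
    also have "\<dots> = K" using c unfolding K_def cand_def lg_def by (auto simp: min_def)
    finally have "card (Cnt n E i) = sm g m i + K" using cC cL by simp
    then show ?thesis using phi_Cnt[OF True] c unfolding K_def cand_def by simp
  qed
  then show ?thesis using PG by auto
qed

theorem theorem2p2:
  fixes n :: nat
  shows "bij_betw (phi n) (parking_graphs n) (parking_functions n)"
proof -
  have "inj_on (phi n) (parking_graphs n)"
    by (rule inj_onI) (use phi_inj in \<open>auto simp: pg_def\<close>)
  moreover have "phi n ` parking_graphs n = parking_functions n"
  proof
    show "phi n ` parking_graphs n \<subseteq> parking_functions n" using phi_PF by (auto simp: pg_def)
    show "parking_functions n \<subseteq> phi n ` parking_graphs n" using surj_PF by fastforce
  qed
  ultimately show ?thesis unfolding bij_betw_def by simp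
qed

end
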